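(* Let $d\ge1$, $p\ge1$, $\sigma>0$ and let $F$, $U$ satisfy the standing assumption of the context. Then the mapping $\Phi:\mathcal P_p(\mathbb R^d)\to\mathcal P_p(\mathbb R^d)$ is $1/p$-Hölder continuous with respect to $\mathcal W_p$, i.e. there is $K>0$ with $\mathcal W_p(\Phi(m),\Phi(m'))\le K\,\mathcal W_p(m,m')^{1/p}$ for all $m,m'\in\mathcal P_p(\mathbb R^d)$.
   Context: $\mathcal P(\mathbb R^d)$ denotes the Borel probability measures on $\mathbb R^d$, $\mathcal P_p(\mathbb R^d)$ those with finite $p$-th moment, $\mathcal W_p$ the $p$-Wasserstein distance. Standing assumption: (a) $F:\mathcal P(\mathbb R^d)\to\mathbb R$ is non-negative and there is a continuous function $\frac{\delta F}{\delta m}:\mathcal P(\mathbb R^d)\times\mathbb R^d\to\mathbb R$ such that for all $m_0,m_1$, $F(m_1)-F(m_0)=\int_0^1\int\frac{\delta F}{\delta m}(m_\lambda,x)\,(m_1-m_0)(dx)\,d\lambda$ with $m_\lambda=(1-\lambda)m_0+\lambda m_1$; and there are $L_F,M_F>0$ with $|\frac{\delta F}{\delta m}(m,x)-\frac{\delta F}{\delta m}(m',x')|\le L_F(\mathcal W_p(m,m')+|x-x'|)$ and $|\frac{\delta F}{\delta m}(m,x)|\le M_F$ for all $m,m',x,x'$. (b) $U:\mathbb R^d\to\mathbb R$ is measurable, $\int e^{-U}dx=1$, $\operatorname{ess\,inf}U>-\infty$, $\liminf_{|x|\to\infty}U(x)/|x|^p>0$. $g$ has density $e^{-U}$ and $H(\mu|g)=\int\log\frac{d\mu}{dg}d\mu$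 if $\mu\ll g$, $+\infty$ otherwise. $\Phi(m)$ is the unique minimizer over $\mu\in\mathcal P(\mathbb R^d)$ of $\int\frac{\delta F}{\delta m}(m,x)\mu(dx)+\frac{\sigma^2}{2}H(\mu|g)$, i.e. the probability measure with density proportional to $\exp(-\frac{2}{\sigma^2}\frac{\delta F}{\delta m}(m,x)-U(x))$. *)

theory Defs
  imports "HOL-Probability.Probability"
begin

definition prob_borel :: "'a::euclidean_space measure \<Rightarrow> bool" where
  "prob_borel m \<longleftrightarrow> prob_space m \<and> sets m = sets borel"

definition prob_p :: "real \<Rightarrow> 'a::euclidean_space measure \<Rightarrow> bool" where
  "prob_p p m \<longleftrightarrow> prob_borel m \<and> (\<integral>\<^sup>+ x. ennreal (norm x powr p) \<partial>m) < \<infinity>"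

definition couplings :: "'a::euclidean_space measure \<Rightarrow> 'a measure \<Rightarrow> ('a \<times> 'a) measure set" where
  "couplings \<mu> \<nu> = {\<pi>. prob_space \<pi> \<and> sets \<pi> = sets borel \<and>
      distr \<pi> borel fst = \<mu> \<and> distr \<pi> borel snd = \<nu>}"

definition wass :: "real \<Rightarrow> 'a::euclidean_space measure \<Rightarrow> 'a measure \<Rightarrow> ennreal" where
  "wass p \<mu> \<nu> =
     (let c = (INF \<pi>\<in>couplings \<mu> \<nu>. \<integral>\<^sup>+ z. ennreal (dist (fst z) (snd z) powr p) \<partial>\<pi>)
      in if c = \<infinity> then \<infinity> else ennreal (enn2real c powr (1 / p)))"

definition mix :: "real \<Rightarrow> 'a::euclidean_space measure \<Rightarrow> 'a measure \<Rightarrow> 'a measure" where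
  "mix l m0 m1 = measure_of UNIV (sets borel)
      (\<lambda>A. ennreal (1 - l) * emeasure m0 A + ennreal l * emeasure m1 A)"

definition weak_conv :: "(nat \<Rightarrow> 'a::euclidean_space measure) \<Rightarrow> 'a measure \<Rightarrow> bool" where
  "weak_conv ms m \<longleftrightarrow> (\<forall>f::'a \<Rightarrow> real. continuous_on UNIV f \<and> bounded (range f) \<longrightarrow>
      (\<lambda>n. \<integral> x. f x \<partial>(ms n)) \<longlonglongrightarrow> (\<integral> x. f x \<partial>m))"

definition Phi :: "real \<Rightarrow> ('a::euclidean_space measure \<Rightarrow> 'a \<Rightarrow> real) \<Rightarrow> ('a \<Rightarrow> real)
                   \<Rightarrow> 'a measure \<Rightarrow> 'a measure" where
  "Phi \<sigma> dF U m =
     (let Z = (\<integral> x. exp (- (2 / \<sigma>\<^sup>2) * dF m x - U x) \<partial>lborel)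
      in density lborel (\<lambda>x. ennreal (exp (- (2 / \<sigma>\<^sup>2) * dF m x - U x) / Z)))"

end

theory Submission
  imports Defs
begin

lemma exp_abs_integrable_1d:
  fixes a :: real assumes a: "a > 0"
  shows "(\<integral>\<^sup>+ t. ennreal (exp (- a * \<bar>t\<bar>)) \<partial>lborel) < \<infinity>"
proof -
  let ?e = "exponential_density a"
  have m[measurable]: "?e \<in> borel_measurable borel" by (simp add: exponential_density_def)
  have i1: "(\<integral>\<^sup>+ t. ennreal (?e t) \<partial>lborel) = 1"
  proof -
    interpret prob_space "density lborel (\<lambda>t. ennreal (?e t))"
      using prob_space_exponential_density[OF a] .
    have "emeasure (density lborel (\<lambda>t. ennreal (?e t))) UNIV = 1"
      using emeasure_space_1 by simp
    then show ?thesis by (simp add: emeasure_density)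
  qed
  have i2: "(\<integral>\<^sup>+ t. ennreal (?e (- t)) \<partial>lborel) = 1"
  proof -
    have "(\<integral>\<^sup>+ t. ennreal (?e t) \<partial>lborel) = ennreal \<bar>-1\<bar> * (\<integral>\<^sup>+ t. ennreal (?e (0 + (-1) * t)) \<partial>lborel)"
      by (rule nn_integral_real_affine) auto
    then show ?thesis using i1 by simp
  qed
  have le: "ennreal (exp (- a * \<bar>t\<bar>)) \<le> ennreal (1/a) * (ennreal (?e t) + ennreal (?e (-t)))" for t
  proof -
    have "exp (- a * \<bar>t\<bar>) \<le> (1/a) * (?e t + ?e (-t))"
      using a by (auto simp: exponential_density_def field_simps abs_if)
    moreover have "?e t \<ge> 0" "?e (-t) \<ge> 0" using a by (auto simp: exponential_density_def)
    ultimately show ?thesis using a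
      by (simp add: ennreal_mult[symmetric] ennreal_plus[symmetric] del: ennreal_plus)
  qed
  have "(\<integral>\<^sup>+ t. ennreal (exp (- a * \<bar>t\<bar>)) \<partial>lborel) \<le> (\<integral>\<^sup>+ t. ennreal (1/a) * (ennreal (?e t) + ennreal (?e (-t))) \<partial>lborel)"
    by (rule nn_integral_mono) (rule le)
  also have "\<dots> = ennreal (1/a) * ((\<integral>\<^sup>+ t. ennreal (?e t) \<partial>lborel) + (\<integral>\<^sup>+ t. ennreal (?e (-t)) \<partial>lborel))"
    by (subst nn_integral_cmult) (auto simp: nn_integral_add)
  also have "\<dots> < \<infinity>" using i1 i2 by (simp add: ennreal_mult_less_top)
  finally show ?thesis .
qed

lemma exp_norm_integrable:
  fixes a :: real assumes a: "a > 0"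
  shows "(\<integral>\<^sup>+ x. ennreal (exp (- a * norm (x::'a::euclidean_space))) \<partial>lborel) < \<infinity>"
proof -
  define n where "n = real DIM('a)"
  have n: "n \<ge> 1" proof -
    have "DIM('a) \<ge> 1" using DIM_positive[where 'a='a] by linarith
    then show ?thesis unfolding n_def by simp
  qed
  define b where "b = a / n"
  have b: "b > 0" using a n by (simp add: b_def)
  have le: "ennreal (exp (- a * norm x)) \<le> (\<Prod>i\<in>Basis. ennreal (exp (- b * \<bar>x \<bullet> i\<bar>)))" for x :: 'a
  proof -
    have "(\<Sum>i\<in>Basis. \<bar>x \<bullet> i\<bar>) \<le> (\<Sum>i\<in>(Basis::'a set). norm x)"
      by (rule sum_mono) (simp add: Basis_le_norm)
    then have "(\<Sum>i\<in>Basis. \<bar>x \<bullet> i\<bar>) \<le> n * norm x" by (simp add: n_def)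
    then have "b * (\<Sum>i\<in>Basis. \<bar>x \<bullet> i\<bar>) \<le> a * norm x"
      using b n a by (simp add: b_def field_simps)
    then have "- a * norm x \<le> (\<Sum>i\<in>Basis. - b * \<bar>x \<bullet> i\<bar>)"
      by (simp add: sum_negf sum_distrib_left[symmetric])
    then have "exp (- a * norm x) \<le> (\<Prod>i\<in>Basis. exp (- b * \<bar>x \<bullet> i\<bar>))"
      by (simp add: exp_sum[symmetric])
    then have "ennreal (exp (- a * norm x)) \<le> ennreal (\<Prod>i\<in>Basis. exp (- b * \<bar>x \<bullet> i\<bar>))"
      by (rule ennreal_leI)
    then show ?thesis by (simp add: prod_ennreal)
  qed
  have "(\<integral>\<^sup>+ x. ennreal (exp (- a * norm (x::'a))) \<partial>lborel) \<le> (\<integral>\<^sup>+ x. (\<Prod>i\<in>Basis. ennreal (exp (- b * \<bar>(x::'a) \<bullet> i\<bar>))) \<partial>lborel)"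
    using le by (intro nn_integral_mono) auto
  also have "\<dots> = (\<Prod>i\<in>(Basis::'a set). (\<integral>\<^sup>+t. ennreal (exp (- b * \<bar>t\<bar>)) \<partial>lborel))"
    by (rule nn_integral_lborel_prod[where f="\<lambda>i t. ennreal (exp (- b * \<bar>t\<bar>))"]) auto
  also have "\<dots> < \<infinity>"
    using exp_abs_integrable_1d[OF b] by (simp add: power_less_top_ennreal)
  finally show ?thesis .
qed

lemma moment_U:
  fixes U :: "'a::euclidean_space \<Rightarrow> real" and p :: real
  assumes p: "p \<ge> 1"
    and U_meas[measurable]: "U \<in> borel_measurable borel"
    and U_norm: "(\<integral>\<^sup>+ x. ennreal (exp (- U x)) \<partial>lborel) = 1"
    and U_growth: "Liminf at_infinity (\<lambda>x. ereal (U x / norm x powr p)) > 0"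
  shows "(\<integral>\<^sup>+ x. ennreal (norm x powr p * exp (- U x)) \<partial>lborel) < \<infinity>"
proof -
  obtain c :: real where c0: "0 < ereal c" and cL: "ereal c < Liminf at_infinity (\<lambda>x. ereal (U x / norm x powr p))"
    using ereal_dense2[OF U_growth] by blast
  have c: "c > 0" using c0 by simp
  from less_LiminfD[OF cL] obtain R where R: "\<And>x. R \<le> norm x \<Longrightarrow> c < U x / norm x powr p"
    unfolding eventually_at_infinity by auto
  define R' where "R' = max R 1"
  have pt: "norm x powr p * exp (- U x) \<le> R' powr p * exp (- U x) + (2/c) * exp (- (c/2) * norm x)" for x :: 'a
  proof (cases "norm x \<ge> R'")
    case True
    define t where "t = norm x powr p"
    have nx1: "norm x \<ge> 1" using True by (simp add: R'_def)
    have tpos: "t > 0" using nx1 by (auto simp: t_def)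
    have "c < U x / t" using R[of x] True by (simp add: R'_def t_def)
    then have Ut: "U x > c * t" using tpos by (simp add: field_simps)
    have tn: "t \<ge> norm x"
    proof -
      have "norm x powr 1 \<le> norm x powr p" using nx1 p by (intro powr_mono) auto
      then show ?thesis using nx1 by (simp add: t_def)
    qed
    have "t * exp (- U x) \<le> t * exp (- (c * t))"
      using Ut tpos by (intro mult_left_mono) auto
    also have "\<dots> \<le> (2/c) * exp (- (c/2) * t)"
    proof -
      have "1 + c*t/2 \<le> exp (c*t/2)" by (rule exp_ge_add_one_self_aux) (use c tpos in simp)
      then have "t \<le> (2/c) * exp (c*t/2)" using c tpos by (simp add: field_simps)
      then have "t * exp (- (c*t/2)) \<le> (2/c) * exp (c*t/2) * exp (- (c*t/2))"
        by (intro mult_right_mono) auto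
      also have "\<dots> = 2/c" by (simp add: mult.assoc exp_add[symmetric])
      finally have "t * exp (- (c*t/2)) \<le> 2/c" .
      then have "t * exp (- (c*t/2)) * exp (- (c*t/2)) \<le> (2/c) * exp (- (c*t/2))"
        by (intro mult_right_mono) auto
      moreover have "exp (- (c*t/2)) * exp (- (c*t/2)) = exp (- (c * t))"
        by (simp add: exp_add[symmetric])
      ultimately show ?thesis by (simp add: mult.assoc)
    qed
    also have "\<dots> \<le> (2/c) * exp (- (c/2) * norm x)"
      using tn c by (intro mult_left_mono) auto
    finally have "norm x powr p * exp (- U x) \<le> (2/c) * exp (- (c/2) * norm x)" by (simp add: t_def)
    moreover have "0 \<le> R' powr p * exp (- U x)" by simp
    ultimately show ?thesis by linarith
  next
    case False
    have "norm x powr p \<le> R' powr p" using False p by (intro powr_mono2) auto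
    then have "norm x powr p * exp (- U x) \<le> R' powr p * exp (- U x)"
      by (intro mult_right_mono) auto
    moreover have "0 \<le> (2/c) * exp (- (c/2) * norm x)" using c by simp
    ultimately show ?thesis by linarith
  qed
  have "(\<integral>\<^sup>+ x. ennreal (norm x powr p * exp (- U x)) \<partial>lborel) \<le>
        (\<integral>\<^sup>+ x. ennreal (R' powr p) * ennreal (exp (- U x)) + ennreal (2/c) * ennreal (exp (- (c/2) * norm (x::'a))) \<partial>lborel)"
  proof (intro nn_integral_mono)
    fix x :: 'a
    have "ennreal (norm x powr p * exp (- U x)) \<le> ennreal (R' powr p * exp (- U x) + (2/c) * exp (- (c/2) * norm x))"
      using pt[of x] by (rule ennreal_leI)
    also have "\<dots> = ennreal (R' powr p) * ennreal (exp (- U x)) + ennreal (2/c) * ennreal (exp (- (c/2) * norm x))"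
    proof -
      have a1: "0 \<le> R' powr p * exp (- U x)" "0 \<le> (2/c) * exp (- (c/2) * norm x)" using c by auto
      have e1: "ennreal (R' powr p * exp (- U x)) = ennreal (R' powr p) * ennreal (exp (- U x))"
        by (simp add: ennreal_mult)
      have e2: "ennreal ((2/c) * exp (- (c/2) * norm x)) = ennreal (2/c) * ennreal (exp (- (c/2) * norm x))"
        using c by (intro ennreal_mult) auto
      show ?thesis by (simp only: ennreal_plus[OF a1] e1 e2)
    qed
    finally show "ennreal (norm x powr p * exp (- U x)) \<le> \<dots>" .
  qed
  also have "\<dots> = ennreal (R' powr p) * (\<integral>\<^sup>+ x. ennreal (exp (- U x)) \<partial>lborel) + ennreal (2/c) * (\<integral>\<^sup>+ x. ennreal (exp (- (c/2) * norm (x::'a))) \<partial>lborel)"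
    by (subst nn_integral_add) (auto simp: nn_integral_cmult)
  also have "\<dots> < \<infinity>"
    using U_norm exp_norm_integrable[of "c/2", where 'a='a] c
    by (simp add: ennreal_mult_less_top)
  finally show ?thesis .
qed

lemma dist_powr_le:
  fixes x y :: "'a::real_normed_vector" assumes p: "p \<ge> 0"
  shows "dist x y powr p \<le> 2 powr p * (norm x powr p + norm y powr p)"
proof -
  have "dist x y \<le> norm x + norm y" by (simp add: dist_norm norm_triangle_ineq4)
  also have "\<dots> \<le> 2 * max (norm x) (norm y)" by simp
  finally have "dist x y powr p \<le> (2 * max (norm x) (norm y)) powr p"
    using p by (intro powr_mono2) auto
  also have "\<dots> = 2 powr p * max (norm x) (norm y) powr p" by (simp add: powr_mult)
  also have "\<dots> \<le> 2 powr p * (norm x powr p + norm y powr p)"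
    by (intro mult_left_mono) (auto simp: max_def)
  finally show ?thesis .
qed

lemma prob_borel_space: "prob_borel m \<Longrightarrow> space m = UNIV"
  unfolding prob_borel_def by (metis sets_eq_imp_space_eq space_borel)

lemma fst_borel[measurable]: "fst \<in> borel_measurable (borel::('a::euclidean_space \<times> 'b::euclidean_space) measure)"
proof -
  have "fst \<in> measurable ((borel::'a measure) \<Otimes>\<^sub>M (borel::'b measure)) (borel::'a measure)" by simp
  then show ?thesis by (simp only: borel_prod)
qed

lemma snd_borel[measurable]: "snd \<in> borel_measurable (borel::('a::euclidean_space \<times> 'b::euclidean_space) measure)"
proof -
  have "snd \<in> measurable ((borel::'a measure) \<Otimes>\<^sub>M (borel::'b measure)) (borel::'b measure)" by simp
  then show ?thesis by (simp only: borel_prod)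
qed

lemma couplings_fst:
  fixes \<mu> :: "'a::euclidean_space measure"
  assumes "\<pi> \<in> couplings \<mu> \<nu>" and f[measurable]: "f \<in> borel_measurable borel"
  shows "(\<integral>\<^sup>+ z. f (fst z) \<partial>\<pi>) = (\<integral>\<^sup>+ x. f x \<partial>\<mu>)"
proof -
  have s: "sets \<pi> = sets borel" and d: "distr \<pi> borel fst = \<mu>" using assms unfolding couplings_def by auto
  have m: "fst \<in> measurable \<pi> borel"
    by (subst measurable_cong_sets[OF s refl]) (rule fst_borel)
  have "(\<integral>\<^sup>+ x. f x \<partial>\<mu>) = (\<integral>\<^sup>+ x. f x \<partial>distr \<pi> borel fst)" using d by simp
  also have "\<dots> = (\<integral>\<^sup>+ z. f (fst z) \<partial>\<pi>)" by (rule nn_integral_distr[OF m]) simp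
  finally show ?thesis by simp
qed

lemma couplings_snd:
  fixes \<mu> :: "'a::euclidean_space measure"
  assumes "\<pi> \<in> couplings \<mu> \<nu>" and f[measurable]: "f \<in> borel_measurable borel"
  shows "(\<integral>\<^sup>+ z. f (snd z) \<partial>\<pi>) = (\<integral>\<^sup>+ x. f x \<partial>\<nu>)"
proof -
  have s: "sets \<pi> = sets borel" and d: "distr \<pi> borel snd = \<nu>" using assms unfolding couplings_def by auto
  have m: "snd \<in> measurable \<pi> borel"
    by (subst measurable_cong_sets[OF s refl]) (rule snd_borel)
  have "(\<integral>\<^sup>+ x. f x \<partial>\<nu>) = (\<integral>\<^sup>+ x. f x \<partial>distr \<pi> borel snd)" using d by simp
  also have "\<dots> = (\<integral>\<^sup>+ z. f (snd z) \<partial>\<pi>)" by (rule nn_integral_distr[OF m]) simp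
  finally show ?thesis by simp
qed

lemma product_coupling:
  fixes \<mu> \<nu> :: "'a::euclidean_space measure"
  assumes "prob_borel \<mu>" "prob_borel \<nu>"
  shows "\<mu> \<Otimes>\<^sub>M \<nu> \<in> couplings \<mu> \<nu>"
proof -
  interpret m: prob_space \<mu> using assms unfolding prob_borel_def by auto
  interpret n: prob_space \<nu> using assms unfolding prob_borel_def by auto
  interpret pair_prob_space \<mu> \<nu> ..
  have sm: "sets \<mu> = sets borel" and sn: "sets \<nu> = sets borel" using assms unfolding prob_borel_def by auto
  have sp: "sets (\<mu> \<Otimes>\<^sub>M \<nu>) = sets (borel::('a\<times>'a) measure)"
    using sets_pair_measure_cong[OF sm sn] borel_prod by metis
  have "distr (\<mu> \<Otimes>\<^sub>M \<nu>) borel fst = \<mu>"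
  proof (rule measure_eqI)
    show "sets (distr (\<mu> \<Otimes>\<^sub>M \<nu>) borel fst) = sets \<mu>" using sm by simp
    fix A assume "A \<in> sets (distr (\<mu> \<Otimes>\<^sub>M \<nu>) borel fst)"
    then have A: "A \<in> sets \<mu>" using sm by simp
    have "fst \<in> measurable (\<mu> \<Otimes>\<^sub>M \<nu>) borel"
      by (subst measurable_cong_sets[OF sp refl]) (rule fst_borel)
    then have "emeasure (distr (\<mu> \<Otimes>\<^sub>M \<nu>) borel fst) A = emeasure (\<mu> \<Otimes>\<^sub>M \<nu>) (fst -` A \<inter> space (\<mu> \<Otimes>\<^sub>M \<nu>))"
      using A sm by (intro emeasure_distr) auto
    also have "fst -` A \<inter> space (\<mu> \<Otimes>\<^sub>M \<nu>) = A \<times> space \<nu>"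
      using prob_borel_space[OF assms(1)] prob_borel_space[OF assms(2)] by (auto simp: space_pair_measure)
    also have "emeasure (\<mu> \<Otimes>\<^sub>M \<nu>) (A \<times> space \<nu>) = emeasure \<mu> A * emeasure \<nu> (space \<nu>)"
      using A by (intro n.emeasure_pair_measure_Times) auto
    finally show "emeasure (distr (\<mu> \<Otimes>\<^sub>M \<nu>) borel fst) A = emeasure \<mu> A"
      by (simp add: n.emeasure_space_1)
  qed
  moreover have "distr (\<mu> \<Otimes>\<^sub>M \<nu>) borel snd = \<nu>"
  proof (rule measure_eqI)
    show "sets (distr (\<mu> \<Otimes>\<^sub>M \<nu>) borel snd) = sets \<nu>" using sn by simp
    fix A assume "A \<in> sets (distr (\<mu> \<Otimes>\<^sub>M \<nu>) borel snd)"
    then have A: "A \<in> sets \<nu>" using sn by simp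
    have "snd \<in> measurable (\<mu> \<Otimes>\<^sub>M \<nu>) borel"
      by (subst measurable_cong_sets[OF sp refl]) (rule snd_borel)
    then have "emeasure (distr (\<mu> \<Otimes>\<^sub>M \<nu>) borel snd) A = emeasure (\<mu> \<Otimes>\<^sub>M \<nu>) (snd -` A \<inter> space (\<mu> \<Otimes>\<^sub>M \<nu>))"
      using A sn by (intro emeasure_distr) auto
    also have "snd -` A \<inter> space (\<mu> \<Otimes>\<^sub>M \<nu>) = space \<mu> \<times> A"
      using prob_borel_space[OF assms(1)] prob_borel_space[OF assms(2)] by (auto simp: space_pair_measure)
    also have "emeasure (\<mu> \<Otimes>\<^sub>M \<nu>) (space \<mu> \<times> A) = emeasure \<mu> (space \<mu>) * emeasure \<nu> A"
      using A by (intro n.emeasure_pair_measure_Times) auto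
    finally show "emeasure (distr (\<mu> \<Otimes>\<^sub>M \<nu>) borel snd) A = emeasure \<nu> A"
      by (simp add: m.emeasure_space_1)
  qed
  ultimately show ?thesis unfolding couplings_def using sp prob_space_axioms by auto
qed

lemma wass_le_coupling:
  fixes \<mu> \<nu> :: "'a::euclidean_space measure"
  assumes pi: "\<pi> \<in> couplings \<mu> \<nu>" and p: "p > 0" and B: "B \<ge> 0"
    and cost: "(\<integral>\<^sup>+ z. ennreal (dist (fst z) (snd z) powr p) \<partial>\<pi>) \<le> ennreal B"
  shows "wass p \<mu> \<nu> \<noteq> \<infinity>" and "enn2real (wass p \<mu> \<nu>) \<le> B powr (1/p)"
proof -
  define c where "c = (INF \<pi>\<in>couplings \<mu> \<nu>. \<integral>\<^sup>+ z. ennreal (dist (fst z) (snd z) powr p) \<partial>\<pi>)"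
  have "c \<le> (\<integral>\<^sup>+ z. ennreal (dist (fst z) (snd z) powr p) \<partial>\<pi>)"
    unfolding c_def using pi by (rule INF_lower)
  also note cost
  finally have cB: "c \<le> ennreal B" .
  then have cinf: "c \<noteq> \<infinity>" by (auto simp: top_unique)
  have w: "wass p \<mu> \<nu> = ennreal (enn2real c powr (1 / p))"
    unfolding wass_def c_def[symmetric] Let_def using cinf by simp
  then show "wass p \<mu> \<nu> \<noteq> \<infinity>" by simp
  have "enn2real c \<le> B" using cB B by (simp add: enn2real_leI)
  then have "enn2real c powr (1/p) \<le> B powr (1/p)" using p by (intro powr_mono2) auto
  then show "enn2real (wass p \<mu> \<nu>) \<le> B powr (1/p)" using w by simp
qed

lemma coupling_cost_le:
  fixes \<mu> \<nu> :: "'a::euclidean_space measure"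
  assumes pi: "\<pi> \<in> couplings \<mu> \<nu>" and p: "p \<ge> 0"
  shows "(\<integral>\<^sup>+ z. ennreal (dist (fst z) (snd z) powr p) \<partial>\<pi>) \<le>
    ennreal (2 powr p) * ((\<integral>\<^sup>+ x. ennreal (norm x powr p) \<partial>\<mu>) + (\<integral>\<^sup>+ x. ennreal (norm x powr p) \<partial>\<nu>))"
proof -
  have "(\<integral>\<^sup>+ z. ennreal (dist (fst z) (snd z) powr p) \<partial>\<pi>) \<le>
     (\<integral>\<^sup>+ z. ennreal (2 powr p) * (ennreal (norm (fst z) powr p) + ennreal (norm (snd z) powr p)) \<partial>\<pi>)"
  proof (intro nn_integral_mono)
    fix z :: "'a \<times> 'a"
    have "ennreal (dist (fst z) (snd z) powr p) \<le> ennreal (2 powr p * (norm (fst z) powr p + norm (snd z) powr p))"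
      by (intro ennreal_leI dist_powr_le p)
    also have "\<dots> = ennreal (2 powr p) * (ennreal (norm (fst z) powr p) + ennreal (norm (snd z) powr p))"
      by (simp add: ennreal_mult ennreal_plus)
    finally show "ennreal (dist (fst z) (snd z) powr p) \<le> \<dots>" .
  qed
  also have "\<dots> = ennreal (2 powr p) * ((\<integral>\<^sup>+ z. ennreal (norm (fst z) powr p) \<partial>\<pi>) + (\<integral>\<^sup>+ z. ennreal (norm (snd z) powr p) \<partial>\<pi>))"
  proof -
    have s: "sets \<pi> = sets borel" using pi unfolding couplings_def by auto
    have m1: "(\<lambda>z. ennreal (norm (fst z) powr p)) \<in> borel_measurable \<pi>"
      by (subst measurable_cong_sets[OF s refl]) measurable
    have m2: "(\<lambda>z. ennreal (norm (snd z) powr p)) \<in> borel_measurable \<pi>"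
      by (subst measurable_cong_sets[OF s refl]) measurable
    show ?thesis using m1 m2 by (simp add: nn_integral_add nn_integral_cmult)
  qed
  also have "\<dots> = ennreal (2 powr p) * ((\<integral>\<^sup>+ x. ennreal (norm x powr p) \<partial>\<mu>) + (\<integral>\<^sup>+ x. ennreal (norm x powr p) \<partial>\<nu>))"
    using couplings_fst[OF pi, of "\<lambda>x. ennreal (norm x powr p)"] couplings_snd[OF pi, of "\<lambda>x. ennreal (norm x powr p)"]
    by simp
  finally show ?thesis .
qed

lemma wass_finite:
  fixes \<mu> \<nu> :: "'a::euclidean_space measure"
  assumes "prob_p p \<mu>" "prob_p p \<nu>" "p \<ge> 1"
  shows "wass p \<mu> \<nu> \<noteq> \<infinity>"
proof -
  have pb: "prob_borel \<mu>" "prob_borel \<nu>" using assms unfolding prob_p_def by auto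
  have f: "(\<integral>\<^sup>+ x. ennreal (norm x powr p) \<partial>\<mu>) < \<infinity>" "(\<integral>\<^sup>+ x. ennreal (norm x powr p) \<partial>\<nu>) < \<infinity>"
    using assms unfolding prob_p_def by auto
  define C where "C = ennreal (2 powr p) * ((\<integral>\<^sup>+ x. ennreal (norm x powr p) \<partial>\<mu>) + (\<integral>\<^sup>+ x. ennreal (norm x powr p) \<partial>\<nu>))"
  have "C < \<infinity>" using f unfolding C_def by (simp add: ennreal_mult_less_top)
  then obtain B where B: "C = ennreal B" "B \<ge> 0" by (cases C) auto
  show ?thesis
    using wass_le_coupling(1)[OF product_coupling[OF pb] _ B(2)] coupling_cost_le[OF product_coupling[OF pb], of p]
      assms(3) B(1) unfolding C_def by auto
qed

definition cT :: "(('a \<times> 'a) \<times> bool) \<Rightarrow> 'a \<times> 'a" where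
  "cT z = (if snd z then (fst (fst z), fst (fst z)) else fst z)"

definition cS :: "(('a::euclidean_space \<times> 'a) \<times> bool) measure" where
  "cS = ((lborel::'a measure) \<Otimes>\<^sub>M (lborel::'a measure)) \<Otimes>\<^sub>M count_space UNIV"

lemma cS_pred[measurable]: "Measurable.pred cS snd"
proof -
  have "snd \<in> measurable cS (count_space UNIV)" unfolding cS_def by simp
  then show ?thesis unfolding pred_def by (simp add: count_space_def)
qed

lemma cT_meas[measurable]: "cT \<in> measurable (cS::(('a::euclidean_space \<times> 'a) \<times> bool) measure) borel"
proof -
  have "cT \<in> measurable (cS::(('a \<times> 'a) \<times> bool) measure) ((borel::'a measure) \<Otimes>\<^sub>M (borel::'a measure))"
    unfolding cT_def
    apply measurable
    unfolding cS_def
    apply measurable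
    done
  then show ?thesis by (simp only: borel_prod)
qed

lemma key_integral:
  fixes w1 w2 :: "'a::euclidean_space \<times> 'a \<Rightarrow> ennreal" and G :: "'a \<times> 'a \<Rightarrow> ennreal"
  assumes w1m: "w1 \<in> borel_measurable (lborel \<Otimes>\<^sub>M lborel)" and w2m: "w2 \<in> borel_measurable (lborel \<Otimes>\<^sub>M lborel)"
    and [measurable]: "G \<in> borel_measurable borel"
  shows "(\<integral>\<^sup>+ z. G z \<partial>distr (density cS (\<lambda>z. if snd z then w1 (fst z) else w2 (fst z))) borel cT) =
     (\<integral>\<^sup>+ u. w1 u * G (fst u, fst u) \<partial>(lborel \<Otimes>\<^sub>M lborel)) + (\<integral>\<^sup>+ u. w2 u * G u \<partial>(lborel \<Otimes>\<^sub>M lborel))"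
proof -
  interpret C: sigma_finite_measure "count_space (UNIV::bool set)"
    by (rule sigma_finite_measure_count_space_finite) simp
  have f1: "fst \<in> measurable cS (lborel \<Otimes>\<^sub>M lborel)" unfolding cS_def by simp
  have wm: "(\<lambda>z. if snd z then w1 (fst z) else w2 (fst z)) \<in> borel_measurable cS"
    apply (rule measurable_If)
    apply (rule measurable_compose[OF f1 w1m])
    apply (rule measurable_compose[OF f1 w2m])
    using cS_pred unfolding pred_def by simp
  have "(\<integral>\<^sup>+ z. G z \<partial>distr (density cS (\<lambda>z. if snd z then w1 (fst z) else w2 (fst z))) borel cT)
      = (\<integral>\<^sup>+ z. G (cT z) \<partial>density cS (\<lambda>z. if snd z then w1 (fst z) else w2 (fst z)))"
    by (rule nn_integral_distr) auto
  also have "\<dots> = (\<integral>\<^sup>+ z. (if snd z then w1 (fst z) else w2 (fst z)) * G (cT z) \<partial>cS)"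
    by (rule nn_integral_density) (use wm in auto)
  also have "\<dots> = (\<integral>\<^sup>+ u. \<integral>\<^sup>+ b. (if b then w1 u else w2 u) * G (cT (u, b)) \<partial>count_space UNIV \<partial>(lborel \<Otimes>\<^sub>M lborel))"
  proof -
    define F where "F = (\<lambda>z. (if snd z then w1 (fst z) else w2 (fst z)) * G (cT z))"
    have "F \<in> borel_measurable cS"
      unfolding F_def using wm by measurable
    then have m: "F \<in> borel_measurable ((lborel \<Otimes>\<^sub>M lborel) \<Otimes>\<^sub>M count_space UNIV)"
      by (simp add: cS_def)
    have "integral\<^sup>N cS F = (\<integral>\<^sup>+ u. \<integral>\<^sup>+ b. F (u, b) \<partial>count_space UNIV \<partial>(lborel \<Otimes>\<^sub>M lborel))"
      unfolding cS_def by (rule C.nn_integral_fst[OF m, symmetric])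
    then show ?thesis unfolding F_def by (simp cong: if_cong)
  qed
  also have "\<dots> = (\<integral>\<^sup>+ u. w1 u * G (fst u, fst u) + w2 u * G u \<partial>(lborel \<Otimes>\<^sub>M lborel))"
    by (simp add: nn_integral_count_space_finite UNIV_bool cT_def add.commute)
  also have "\<dots> = (\<integral>\<^sup>+ u. w1 u * G (fst u, fst u) \<partial>(lborel \<Otimes>\<^sub>M lborel)) + (\<integral>\<^sup>+ u. w2 u * G u \<partial>(lborel \<Otimes>\<^sub>M lborel))"
  proof (rule nn_integral_add)
    have [measurable]: "G \<in> borel_measurable (lborel \<Otimes>\<^sub>M lborel)"
      unfolding lborel_prod using assms(3) by simp
    show "(\<lambda>u. w1 u * G (fst u, fst u)) \<in> borel_measurable (lborel \<Otimes>\<^sub>M lborel)"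
      using w1m by measurable
    show "(\<lambda>u. w2 u * G u) \<in> borel_measurable (lborel \<Otimes>\<^sub>M lborel)"
      using w2m by measurable
  qed
  finally show ?thesis .
qed

lemma density_coupling:
  fixes f g :: "'a::euclidean_space \<Rightarrow> real"
  assumes fm[measurable]: "f \<in> borel_measurable borel" and gm[measurable]: "g \<in> borel_measurable borel"
    and f0: "\<And>x. f x \<ge> 0" and g0: "\<And>x. g x \<ge> 0"
    and f1: "(\<integral>\<^sup>+ x. ennreal (f x) \<partial>lborel) = 1" and g1: "(\<integral>\<^sup>+ x. ennreal (g x) \<partial>lborel) = 1"
    and p: "p \<ge> 0"
  shows "\<exists>\<pi> \<in> couplings (density lborel (\<lambda>x. ennreal (f x))) (density lborel (\<lambda>x. ennreal (g x))).
     (\<integral>\<^sup>+ z. ennreal (dist (fst z) (snd z) powr p) \<partial>\<pi>) \<le>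
       ennreal (2 powr p) * (\<integral>\<^sup>+ x. ennreal (norm x powr p * \<bar>f x - g x\<bar>) \<partial>lborel)"
proof -
  define h where "h x = min (f x) (g x)" for x
  define P where "P x = max 0 (f x - g x)" for x
  define N where "N x = max 0 (g x - f x)" for x
  have [measurable]: "h \<in> borel_measurable borel" "P \<in> borel_measurable borel" "N \<in> borel_measurable borel"
    unfolding h_def[abs_def] P_def[abs_def] N_def[abs_def] by measurable
  have h0: "h x \<ge> 0" and P0: "P x \<ge> 0" and N0: "N x \<ge> 0" for x
    using f0[of x] g0[of x] by (auto simp: h_def P_def N_def)
  have fs: "f x = h x + P x" and gs: "g x = h x + N x" and PN: "P x + N x = \<bar>f x - g x\<bar>" for x
    by (auto simp: h_def P_def N_def)
  have IfhP: "(\<integral>\<^sup>+ x. ennreal (f x) * H x \<partial>lborel) = (\<integral>\<^sup>+ x. ennreal (h x) * H x \<partial>lborel) + (\<integral>\<^sup>+ x. ennreal (P x) * H x \<partial>lborel)"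
    if [measurable]: "H \<in> borel_measurable borel" for H :: "'a \<Rightarrow> ennreal"
  proof -
    have "(\<integral>\<^sup>+ x. ennreal (f x) * H x \<partial>lborel) = (\<integral>\<^sup>+ x. ennreal (h x) * H x + ennreal (P x) * H x \<partial>lborel)"
      by (intro nn_integral_cong) (simp add: fs ennreal_plus[OF h0 P0] distrib_right del: ennreal_plus)
    also have "\<dots> = (\<integral>\<^sup>+ x. ennreal (h x) * H x \<partial>lborel) + (\<integral>\<^sup>+ x. ennreal (P x) * H x \<partial>lborel)"
      by (rule nn_integral_add) auto
    finally show ?thesis .
  qed
  have IghN: "(\<integral>\<^sup>+ x. ennreal (g x) * H x \<partial>lborel) = (\<integral>\<^sup>+ x. ennreal (h x) * H x \<partial>lborel) + (\<integral>\<^sup>+ x. ennreal (N x) * H x \<partial>lborel)"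
    if [measurable]: "H \<in> borel_measurable borel" for H :: "'a \<Rightarrow> ennreal"
  proof -
    have "(\<integral>\<^sup>+ x. ennreal (g x) * H x \<partial>lborel) = (\<integral>\<^sup>+ x. ennreal (h x) * H x + ennreal (N x) * H x \<partial>lborel)"
      by (intro nn_integral_cong) (simp add: gs ennreal_plus[OF h0 N0] distrib_right del: ennreal_plus)
    also have "\<dots> = (\<integral>\<^sup>+ x. ennreal (h x) * H x \<partial>lborel) + (\<integral>\<^sup>+ x. ennreal (N x) * H x \<partial>lborel)"
      by (rule nn_integral_add) auto
    finally show ?thesis .
  qed
  have e1: "(\<integral>\<^sup>+ x. ennreal (h x) \<partial>lborel) + (\<integral>\<^sup>+ x. ennreal (P x) \<partial>lborel) = 1"
    using IfhP[of "\<lambda>_. 1"] f1 by simp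
  have e2: "(\<integral>\<^sup>+ x. ennreal (h x) \<partial>lborel) + (\<integral>\<^sup>+ x. ennreal (N x) \<partial>lborel) = 1"
    using IghN[of "\<lambda>_. 1"] g1 by simp
  have hfin: "(\<integral>\<^sup>+ x. ennreal (h x) \<partial>lborel) \<noteq> \<top>"
  proof
    assume "(\<integral>\<^sup>+ x. ennreal (h x) \<partial>lborel) = \<top>"
    with e1 show False by simp
  qed
  have PNeq: "(\<integral>\<^sup>+ x. ennreal (P x) \<partial>lborel) = (\<integral>\<^sup>+ x. ennreal (N x) \<partial>lborel)"
  proof -
    have "(\<integral>\<^sup>+ x. ennreal (h x) \<partial>lborel) + (\<integral>\<^sup>+ x. ennreal (P x) \<partial>lborel) = (\<integral>\<^sup>+ x. ennreal (h x) \<partial>lborel) + (\<integral>\<^sup>+ x. ennreal (N x) \<partial>lborel)"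
      using e1 e2 by simp
    then show ?thesis using hfin by (simp add: ennreal_add_left_cancel)
  qed
  have Pfin: "(\<integral>\<^sup>+ x. ennreal (P x) \<partial>lborel) \<noteq> \<top>"
  proof
    assume "(\<integral>\<^sup>+ x. ennreal (P x) \<partial>lborel) = \<top>"
    with e1 show False by simp
  qed
  define a where "a = enn2real (\<integral>\<^sup>+ x. ennreal (P x) \<partial>lborel)"
  have a0: "a \<ge> 0" by (simp add: a_def)
  have IP: "(\<integral>\<^sup>+ x. ennreal (P x) \<partial>lborel) = ennreal a" unfolding a_def using Pfin by (simp add: ennreal_enn2real_if)
  have IN: "(\<integral>\<^sup>+ x. ennreal (N x) \<partial>lborel) = ennreal a" using IP PNeq by simp
  define w1 where "w1 u = ennreal (h (fst u)) * ennreal (f (snd u))" for u :: "'a \<times> 'a"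
  define w2 where "w2 u = ennreal (P (fst u)) * ennreal (N (snd u)) * ennreal (1 / a)" for u :: "'a \<times> 'a"
  have w1m[measurable]: "w1 \<in> borel_measurable (lborel \<Otimes>\<^sub>M lborel)" unfolding w1_def[abs_def] by measurable
  have w2m[measurable]: "w2 \<in> borel_measurable (lborel \<Otimes>\<^sub>M lborel)" unfolding w2_def[abs_def] by measurable
  have K1: "(\<integral>\<^sup>+ u. w1 u * H (fst u) \<partial>(lborel \<Otimes>\<^sub>M lborel)) = (\<integral>\<^sup>+ x. ennreal (h x) * H x \<partial>lborel)"
    if [measurable]: "H \<in> borel_measurable borel" for H :: "'a \<Rightarrow> ennreal"
  proof -
    have "(\<integral>\<^sup>+ u. w1 u * H (fst u) \<partial>(lborel \<Otimes>\<^sub>M lborel)) = (\<integral>\<^sup>+ x. \<integral>\<^sup>+ y. w1 (x, y) * H (fst (x, y)) \<partial>lborel \<partial>lborel)"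
      by (rule lborel.nn_integral_fst[symmetric]) measurable
    also have "\<dots> = (\<integral>\<^sup>+ x. ennreal (h x) * H x * (\<integral>\<^sup>+ y. ennreal (f y) \<partial>lborel) \<partial>lborel)"
    proof (intro nn_integral_cong)
      fix x :: 'a
      have "(\<integral>\<^sup>+ y. w1 (x, y) * H (fst (x, y)) \<partial>lborel) = (\<integral>\<^sup>+ y. (ennreal (h x) * H x) * ennreal (f y) \<partial>lborel)"
        by (simp add: w1_def mult_ac)
      also have "\<dots> = ennreal (h x) * H x * (\<integral>\<^sup>+ y. ennreal (f y) \<partial>lborel)"
        by (rule nn_integral_cmult) simp
      finally show "(\<integral>\<^sup>+ y. w1 (x, y) * H (fst (x, y)) \<partial>lborel) = ennreal (h x) * H x * (\<integral>\<^sup>+ y. ennreal (f y) \<partial>lborel)" .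
    qed
    finally show ?thesis using f1 by simp
  qed
  have K2: "(\<integral>\<^sup>+ u. w2 u * H (fst u) \<partial>(lborel \<Otimes>\<^sub>M lborel)) = (\<integral>\<^sup>+ x. ennreal (P x) * H x \<partial>lborel)"
    if [measurable]: "H \<in> borel_measurable borel" for H :: "'a \<Rightarrow> ennreal"
  proof -
    have "(\<integral>\<^sup>+ u. w2 u * H (fst u) \<partial>(lborel \<Otimes>\<^sub>M lborel)) = (\<integral>\<^sup>+ x. \<integral>\<^sup>+ y. w2 (x, y) * H (fst (x, y)) \<partial>lborel \<partial>lborel)"
      by (rule lborel.nn_integral_fst[symmetric]) measurable
    also have "\<dots> = (\<integral>\<^sup>+ x. ennreal (P x) * H x * (ennreal (1/a) * ennreal a) \<partial>lborel)"
    proof (intro nn_integral_cong)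
      fix x :: 'a
      have "(\<integral>\<^sup>+ y. w2 (x, y) * H (fst (x, y)) \<partial>lborel) = (\<integral>\<^sup>+ y. (ennreal (P x) * H x * ennreal (1/a)) * ennreal (N y) \<partial>lborel)"
        by (simp add: w2_def mult_ac)
      also have "\<dots> = ennreal (P x) * H x * ennreal (1/a) * (\<integral>\<^sup>+ y. ennreal (N y) \<partial>lborel)"
        by (rule nn_integral_cmult) simp
      finally show "(\<integral>\<^sup>+ y. w2 (x, y) * H (fst (x, y)) \<partial>lborel) = ennreal (P x) * H x * (ennreal (1/a) * ennreal a)"
        using IN by (simp add: mult_ac)
    qed
    also have "\<dots> = (\<integral>\<^sup>+ x. ennreal (P x) * H x \<partial>lborel)"
    proof (cases "a = 0")
      case True
      have AE0: "AE x in lborel. ennreal (P x) = 0"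
        using IP True by (subst nn_integral_0_iff_AE[symmetric]) auto
      have "(\<integral>\<^sup>+ x. ennreal (P x) * H x \<partial>lborel) = (\<integral>\<^sup>+ (x::'a). 0 \<partial>lborel)"
        apply (rule nn_integral_cong_AE)
        using AE0 by eventually_elim simp
      then show ?thesis using True by simp
    next
      case False
      then have "ennreal (1/a) * ennreal a = 1" using a0 by (simp add: ennreal_mult[symmetric])
      then show ?thesis by simp
    qed
    finally show ?thesis .
  qed
  have K3: "(\<integral>\<^sup>+ u. w2 u * H (snd u) \<partial>(lborel \<Otimes>\<^sub>M lborel)) = (\<integral>\<^sup>+ y. ennreal (N y) * H y \<partial>lborel)"
    if [measurable]: "H \<in> borel_measurable borel" for H :: "'a \<Rightarrow> ennreal"
  proof -
    have "(\<integral>\<^sup>+ u. w2 u * H (snd u) \<partial>(lborel \<Otimes>\<^sub>M lborel)) = (\<integral>\<^sup>+ x. \<integral>\<^sup>+ y. w2 (x, y) * H (snd (x, y)) \<partial>lborel \<partial>lborel)"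
      by (rule lborel.nn_integral_fst[symmetric]) measurable
    also have "\<dots> = (\<integral>\<^sup>+ x. ennreal (P x) * (ennreal (1/a) * (\<integral>\<^sup>+ y. ennreal (N y) * H y \<partial>lborel)) \<partial>lborel)"
    proof (intro nn_integral_cong)
      fix x :: 'a
      have "(\<integral>\<^sup>+ y. w2 (x, y) * H (snd (x, y)) \<partial>lborel) = (\<integral>\<^sup>+ y. (ennreal (P x) * ennreal (1/a)) * (ennreal (N y) * H y) \<partial>lborel)"
        by (simp add: w2_def mult_ac)
      also have "\<dots> = ennreal (P x) * ennreal (1/a) * (\<integral>\<^sup>+ y. ennreal (N y) * H y \<partial>lborel)"
        by (rule nn_integral_cmult) simp
      finally show "(\<integral>\<^sup>+ y. w2 (x, y) * H (snd (x, y)) \<partial>lborel) = ennreal (P x) * (ennreal (1/a) * (\<integral>\<^sup>+ y. ennreal (N y) * H y \<partial>lborel))"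
        by (simp add: mult_ac)
    qed
    also have "\<dots> = ennreal a * ennreal (1/a) * (\<integral>\<^sup>+ y. ennreal (N y) * H y \<partial>lborel)"
      by (subst nn_integral_multc) (auto simp: IP mult_ac)
    also have "\<dots> = (\<integral>\<^sup>+ y. ennreal (N y) * H y \<partial>lborel)"
    proof (cases "a = 0")
      case True
      have AE0: "AE x in lborel. ennreal (N x) = 0"
        using IN True by (subst nn_integral_0_iff_AE[symmetric]) auto
      have "(\<integral>\<^sup>+ x. ennreal (N x) * H x \<partial>lborel) = (\<integral>\<^sup>+ (x::'a). 0 \<partial>lborel)"
        apply (rule nn_integral_cong_AE)
        using AE0 by eventually_elim simp
      then show ?thesis using True by simp
    next
      case False
      then have "ennreal a * ennreal (1/a) = 1" using a0 by (simp add: ennreal_mult[symmetric])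
      then show ?thesis by simp
    qed
    finally show ?thesis .
  qed
  define W where "W z = (if snd z then w1 (fst z) else w2 (fst z))" for z :: "('a \<times> 'a) \<times> bool"
  define \<pi> where "\<pi> = distr (density cS W) borel cT"
  have key: "(\<integral>\<^sup>+ z. G z \<partial>\<pi>) = (\<integral>\<^sup>+ u. w1 u * G (fst u, fst u) \<partial>(lborel \<Otimes>\<^sub>M lborel)) + (\<integral>\<^sup>+ u. w2 u * G u \<partial>(lborel \<Otimes>\<^sub>M lborel))"
    if "G \<in> borel_measurable borel" for G :: "'a \<times> 'a \<Rightarrow> ennreal"
  proof -
    have "W = (\<lambda>z. if snd z then w1 (fst z) else w2 (fst z))" unfolding W_def by simp
    then show ?thesis unfolding \<pi>_def using key_integral[OF w1m w2m that] by simp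
  qed
  have sp: "sets \<pi> = sets borel" unfolding \<pi>_def by simp
  have spc: "space \<pi> = UNIV" unfolding \<pi>_def by simp
  have em: "emeasure \<pi> X = (\<integral>\<^sup>+ z. indicator X z \<partial>\<pi>)" if "X \<in> sets borel" for X
    using that sp by (simp add: nn_integral_indicator)
  have fstm: "fst \<in> measurable \<pi> borel" by (subst measurable_cong_sets[OF sp refl]) (rule fst_borel)
  have sndm: "snd \<in> measurable \<pi> borel" by (subst measurable_cong_sets[OF sp refl]) (rule snd_borel)
  have "emeasure \<pi> (space \<pi>) = 1"
  proof -
    have "emeasure \<pi> (space \<pi>) = (\<integral>\<^sup>+ z. 1 \<partial>\<pi>)" using em[of UNIV] spc by simp
    also have "\<dots> = (\<integral>\<^sup>+ x. ennreal (h x) * 1 \<partial>lborel) + (\<integral>\<^sup>+ x. ennreal (P x) * 1 \<partial>lborel)"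
      using key[of "\<lambda>_. 1"] K1[of "\<lambda>_. 1"] K2[of "\<lambda>_. 1"] by simp
    also have "\<dots> = 1" using e1 by simp
    finally show ?thesis .
  qed
  then have pr: "prob_space \<pi>" by (rule prob_spaceI)
  have m1: "distr \<pi> borel fst = density lborel (\<lambda>x. ennreal (f x))"
  proof (rule measure_eqI)
    show "sets (distr \<pi> borel fst) = sets (density lborel (\<lambda>x. ennreal (f x)))" by simp
    fix A assume "A \<in> sets (distr \<pi> borel fst)"
    then have A[measurable]: "A \<in> sets borel" by simp
    have "emeasure (distr \<pi> borel fst) A = emeasure \<pi> (fst -` A \<inter> space \<pi>)"
      by (rule emeasure_distr[OF fstm A])
    also have "\<dots> = (\<integral>\<^sup>+ z. indicator A (fst z) \<partial>\<pi>)"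
      using em[of "fst -` A \<inter> space \<pi>"] measurable_sets[OF fstm A] sp spc
      by (simp add: indicator_def)
    also have "\<dots> = (\<integral>\<^sup>+ x. ennreal (h x) * indicator A x \<partial>lborel) + (\<integral>\<^sup>+ x. ennreal (P x) * indicator A x \<partial>lborel)"
      using key[of "\<lambda>z. indicator A (fst z)"] K1[of "indicator A"] K2[of "indicator A"] by simp
    also have "\<dots> = (\<integral>\<^sup>+ x. ennreal (f x) * indicator A x \<partial>lborel)"
      using IfhP[of "indicator A"] by simp
    also have "\<dots> = emeasure (density lborel (\<lambda>x. ennreal (f x))) A"
      by (rule emeasure_density[symmetric]) auto
    finally show "emeasure (distr \<pi> borel fst) A = emeasure (density lborel (\<lambda>x. ennreal (f x))) A" .
  qed
  have m2: "distr \<pi> borel snd = density lborel (\<lambda>x. ennreal (g x))"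
  proof (rule measure_eqI)
    show "sets (distr \<pi> borel snd) = sets (density lborel (\<lambda>x. ennreal (g x)))" by simp
    fix A assume "A \<in> sets (distr \<pi> borel snd)"
    then have A[measurable]: "A \<in> sets borel" by simp
    have "emeasure (distr \<pi> borel snd) A = emeasure \<pi> (snd -` A \<inter> space \<pi>)"
      by (rule emeasure_distr[OF sndm A])
    also have "\<dots> = (\<integral>\<^sup>+ z. indicator A (snd z) \<partial>\<pi>)"
      using em[of "snd -` A \<inter> space \<pi>"] measurable_sets[OF sndm A] sp spc
      by (simp add: indicator_def)
    also have "\<dots> = (\<integral>\<^sup>+ x. ennreal (h x) * indicator A x \<partial>lborel) + (\<integral>\<^sup>+ x. ennreal (N x) * indicator A x \<partial>lborel)"
      using key[of "\<lambda>z. indicator A (snd z)"] K1[of "indicator A"] K3[of "indicator A"] by simp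
    also have "\<dots> = (\<integral>\<^sup>+ x. ennreal (g x) * indicator A x \<partial>lborel)"
      using IghN[of "indicator A"] by simp
    also have "\<dots> = emeasure (density lborel (\<lambda>x. ennreal (g x))) A"
      by (rule emeasure_density[symmetric]) auto
    finally show "emeasure (distr \<pi> borel snd) A = emeasure (density lborel (\<lambda>x. ennreal (g x))) A" .
  qed
  have cpl: "\<pi> \<in> couplings (density lborel (\<lambda>x. ennreal (f x))) (density lborel (\<lambda>x. ennreal (g x)))"
    unfolding couplings_def using pr sp m1 m2 by auto
  have cost: "(\<integral>\<^sup>+ z. ennreal (dist (fst z) (snd z) powr p) \<partial>\<pi>) \<le>
       ennreal (2 powr p) * (\<integral>\<^sup>+ x. ennreal (norm x powr p * \<bar>f x - g x\<bar>) \<partial>lborel)"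
  proof -
    have "(\<integral>\<^sup>+ z. ennreal (dist (fst z) (snd z) powr p) \<partial>\<pi>) =
       (\<integral>\<^sup>+ u. w1 u * ennreal (dist (fst u) (fst u) powr p) \<partial>(lborel \<Otimes>\<^sub>M lborel)) + (\<integral>\<^sup>+ u. w2 u * ennreal (dist (fst u) (snd u) powr p) \<partial>(lborel \<Otimes>\<^sub>M lborel))"
    proof -
      have meas: "(\<lambda>z. ennreal (dist (fst z) (snd z) powr p)) \<in> borel_measurable (borel :: ('a \<times> 'a) measure)"
        by measurable
      show ?thesis using key[OF meas] by simp
    qed
    also have "\<dots> = (\<integral>\<^sup>+ u. w2 u * ennreal (dist (fst u) (snd u) powr p) \<partial>(lborel \<Otimes>\<^sub>M lborel))"
      by simp
    also have "\<dots> \<le> (\<integral>\<^sup>+ u. ennreal (2 powr p) * (w2 u * ennreal (norm (fst u) powr p)) + ennreal (2 powr p) * (w2 u * ennreal (norm (snd u) powr p)) \<partial>(lborel \<Otimes>\<^sub>M lborel))"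
    proof (intro nn_integral_mono)
      fix u :: "'a \<times> 'a"
      have "ennreal (dist (fst u) (snd u) powr p) \<le> ennreal (2 powr p * (norm (fst u) powr p + norm (snd u) powr p))"
        by (intro ennreal_leI dist_powr_le p)
      also have "\<dots> = ennreal (2 powr p) * ennreal (norm (fst u) powr p) + ennreal (2 powr p) * ennreal (norm (snd u) powr p)"
        by (simp add: ennreal_mult ennreal_plus distrib_left)
      finally have "w2 u * ennreal (dist (fst u) (snd u) powr p) \<le> w2 u * (ennreal (2 powr p) * ennreal (norm (fst u) powr p) + ennreal (2 powr p) * ennreal (norm (snd u) powr p))"
        by (rule mult_left_mono) simp
      then show "w2 u * ennreal (dist (fst u) (snd u) powr p) \<le> ennreal (2 powr p) * (w2 u * ennreal (norm (fst u) powr p)) + ennreal (2 powr p) * (w2 u * ennreal (norm (snd u) powr p))"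
        by (simp add: distrib_left mult_ac)
    qed
    also have "\<dots> = ennreal (2 powr p) * ((\<integral>\<^sup>+ u. w2 u * ennreal (norm (fst u) powr p) \<partial>(lborel \<Otimes>\<^sub>M lborel)) + (\<integral>\<^sup>+ u. w2 u * ennreal (norm (snd u) powr p) \<partial>(lborel \<Otimes>\<^sub>M lborel)))"
      by (subst nn_integral_add) (auto simp: nn_integral_cmult distrib_left)
    also have "\<dots> = ennreal (2 powr p) * ((\<integral>\<^sup>+ x. ennreal (P x) * ennreal (norm x powr p) \<partial>lborel) + (\<integral>\<^sup>+ x. ennreal (N x) * ennreal (norm x powr p) \<partial>lborel))"
      using K2[of "\<lambda>x. ennreal (norm x powr p)"] K3[of "\<lambda>x. ennreal (norm x powr p)"] by simp
    also have "\<dots> = ennreal (2 powr p) * (\<integral>\<^sup>+ x. ennreal (norm x powr p * \<bar>f x - g x\<bar>) \<partial>lborel)"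
    proof -
      have "(\<integral>\<^sup>+ x. ennreal (P x) * ennreal (norm x powr p) \<partial>lborel) + (\<integral>\<^sup>+ x. ennreal (N x) * ennreal (norm x powr p) \<partial>lborel)
          = (\<integral>\<^sup>+ x. ennreal (P x) * ennreal (norm x powr p) + ennreal (N x) * ennreal (norm x powr p) \<partial>lborel)"
        by (rule nn_integral_add[symmetric]) auto
      also have "\<dots> = (\<integral>\<^sup>+ x. ennreal (norm x powr p * \<bar>f x - g x\<bar>) \<partial>lborel)"
      proof (intro nn_integral_cong)
        fix x :: 'a
        have "ennreal (norm x powr p * \<bar>f x - g x\<bar>) = ennreal (P x * norm x powr p + N x * norm x powr p)"
          using PN[of x] by (metis distrib_right mult.commute)
        also have "\<dots> = ennreal (P x) * ennreal (norm x powr p) + ennreal (N x) * ennreal (norm x powr p)"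
          using P0[of x] N0[of x] by (simp add: ennreal_mult ennreal_plus)
        finally show "ennreal (P x) * ennreal (norm x powr p) + ennreal (N x) * ennreal (norm x powr p) = ennreal (norm x powr p * \<bar>f x - g x\<bar>)" by simp
      qed
      finally show ?thesis by simp
    qed
    finally show ?thesis .
  qed
  show ?thesis using cpl cost by blast
qed

lemma U_int:
  fixes U :: "'a::euclidean_space \<Rightarrow> real"
  assumes Um[measurable]: "U \<in> borel_measurable borel" and Un: "(\<integral>\<^sup>+ x. ennreal (exp (- U x)) \<partial>lborel) = 1"
  shows "integrable lborel (\<lambda>x. exp (- U x))" and "(\<integral> x. exp (- U x) \<partial>lborel) = 1"
proof -
  show "integrable lborel (\<lambda>x. exp (- U x))"
    by (rule integrableI_nonneg) (auto simp: Un)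
  show "(\<integral> x. exp (- U x) \<partial>lborel) = 1"
    by (subst integral_eq_nn_integral) (auto simp: Un)
qed

lemma phi_basic:
  fixes a U :: "'a::euclidean_space \<Rightarrow> real" and B :: real
  assumes am[measurable]: "a \<in> borel_measurable borel" and aB: "\<And>x. \<bar>a x\<bar> \<le> B"
    and Um[measurable]: "U \<in> borel_measurable borel" and Un: "(\<integral>\<^sup>+ x. ennreal (exp (- U x)) \<partial>lborel) = 1"
  shows "integrable lborel (\<lambda>x. exp (a x - U x))"
    and "(\<integral> x. exp (a x - U x) \<partial>lborel) \<ge> exp (- B)"
    and "(\<integral>\<^sup>+ x. ennreal (exp (a x - U x) / (\<integral> x. exp (a x - U x) \<partial>lborel)) \<partial>lborel) = 1"
    and "\<And>x. exp (a x - U x) / (\<integral> x. exp (a x - U x) \<partial>lborel) \<le> exp (2 * B) * exp (- U x)"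
proof -
  note UI = U_int[OF Um Un]
  have le1: "exp (a x - U x) \<le> exp B * exp (- U x)" for x
    using aB[of x] by (simp add: exp_add[symmetric])
  have ge1: "exp (- B) * exp (- U x) \<le> exp (a x - U x)" for x
    using aB[of x] by (simp add: exp_add[symmetric])
  have "integrable lborel (\<lambda>x. exp B * exp (- U x))" using UI(1) by simp
  then show I: "integrable lborel (\<lambda>x. exp (a x - U x))"
    by (rule Bochner_Integration.integrable_bound) (use le1 in auto)
  have "(\<integral> x. exp (- B) * exp (- U x) \<partial>lborel) \<le> (\<integral> x. exp (a x - U x) \<partial>lborel)"
    by (rule integral_mono) (use UI(1) I ge1 in auto)
  then show Zge: "(\<integral> x. exp (a x - U x) \<partial>lborel) \<ge> exp (- B)" using UI(2) by simp
  define Z where "Z = (\<integral> x. exp (a x - U x) \<partial>lborel)"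
  have Zpos: "Z > 0" using Zge unfolding Z_def by (meson exp_gt_zero less_le_trans)
  have "(\<integral>\<^sup>+ x. ennreal (exp (a x - U x) / Z) \<partial>lborel) = ennreal (\<integral> x. exp (a x - U x) / Z \<partial>lborel)"
    by (rule nn_integral_eq_integral) (use I Zpos in auto)
  also have "\<dots> = 1" using Zpos by (simp add: Z_def[symmetric])
  finally show "(\<integral>\<^sup>+ x. ennreal (exp (a x - U x) / (\<integral> x. exp (a x - U x) \<partial>lborel)) \<partial>lborel) = 1"
    by (simp add: Z_def)
  fix x
  have "exp (a x - U x) / Z \<le> exp B * exp (- U x) / exp (- B)"
    using le1[of x] Zge Zpos unfolding Z_def[symmetric] by (intro frac_le) auto
  also have "\<dots> = exp (2 * B) * exp (- U x)" by (simp add: exp_minus field_simps exp_add[symmetric])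
  finally show "exp (a x - U x) / (\<integral> x. exp (a x - U x) \<partial>lborel) \<le> exp (2 * B) * exp (- U x)"
    by (simp add: Z_def)
qed

lemma exp_diff_le:
  fixes s t B :: real assumes "s \<le> B" "t \<le> B"
  shows "\<bar>exp s - exp t\<bar> \<le> exp B * \<bar>s - t\<bar>"
proof -
  have main: "exp s - exp t \<le> exp B * (s - t)" if "t \<le> s" "s \<le> B" for s t :: real
  proof -
    have "1 - (s - t) \<le> exp (- (s - t))" 
    proof -
      have "1 + (t - s) \<le> exp (t - s)" by (rule exp_ge_add_one_self)
      moreover have "exp (- (s - t)) = exp (t - s)" by simp
      ultimately show ?thesis by linarith
    qed
    then have "exp (s - t) * (1 - (s - t)) \<le> exp (s - t) * exp (- (s - t))"
      by (intro mult_left_mono) auto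
    moreover have "exp (s - t) * exp (- (s - t)) = 1" by (simp add: exp_add[symmetric])
    ultimately have "exp (s - t) - 1 \<le> (s - t) * exp (s - t)" by (simp add: algebra_simps)
    then have "exp t * (exp (s - t) - 1) \<le> exp t * ((s - t) * exp (s - t))"
      by (intro mult_left_mono) auto
    then have "exp t * exp (s - t) - exp t \<le> (s - t) * (exp t * exp (s - t))" by (simp add: algebra_simps)
    moreover have et: "exp t * exp (s - t) = exp s" by (simp add: exp_add[symmetric])
    ultimately have "exp s - exp t \<le> (s - t) * exp s" by simp
    also have "\<dots> \<le> (s - t) * exp B" using that by (intro mult_left_mono) auto
    finally show ?thesis by (simp add: mult.commute)
  qed
  show ?thesis
  proof (cases "t \<le> s")
    case True then show ?thesis using main[of t s] assms by auto
  next
    case False then show ?thesis using main[of s t] assms by (auto simp: abs_minus_commute)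
  qed
qed

lemma frac_diff_le:
  fixes E E' Z Z' z0 e1 e2 e3 :: real
  assumes "z0 > 0" "Z \<ge> z0" "Z' \<ge> z0" "\<bar>E - E'\<bar> \<le> e1" "0 \<le> E'" "E' \<le> e2" "\<bar>Z - Z'\<bar> \<le> e3"
  shows "\<bar>E / Z - E' / Z'\<bar> \<le> e1 / z0 + e2 * e3 / z0^2"
proof -
  have Z: "Z > 0" "Z' > 0" using assms by auto
  have eq: "E / Z - E' / Z' = (E - E') / Z + E' * (Z' - Z) / (Z * Z')"
    using Z by (simp add: field_simps)
  have "\<bar>(E - E') / Z\<bar> \<le> e1 / z0"
  proof -
    have "\<bar>(E - E') / Z\<bar> = \<bar>E - E'\<bar> / Z" using Z by simp
    also have "\<dots> \<le> e1 / z0" using assms Z by (intro frac_le) auto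
    finally show ?thesis .
  qed
  moreover have "\<bar>E' * (Z' - Z) / (Z * Z')\<bar> \<le> e2 * e3 / z0^2"
  proof -
    have "\<bar>E' * (Z' - Z) / (Z * Z')\<bar> = E' * \<bar>Z - Z'\<bar> / (Z * Z')" using Z assms by (simp add: abs_mult abs_minus_commute)
    also have "\<dots> \<le> e2 * e3 / (z0 * z0)"
      using assms Z by (intro frac_le mult_mono mult_pos_pos) auto
    finally show ?thesis by (simp add: power2_eq_square)
  qed
  ultimately show ?thesis unfolding eq
    using abs_triangle_ineq[of "(E - E') / Z" "E' * (Z' - Z) / (Z * Z')"] by linarith
qed

lemma alg_aux: "(X::real) > 0 \<Longrightarrow> X * d * E / inverse X + X * E * (X * d) / (inverse X)^2 = (X * X + X * X * (X * X)) * d * E"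
  by (simp add: divide_inverse power2_eq_square algebra_simps)

lemma phi_diff:
  fixes a a' U :: "'a::euclidean_space \<Rightarrow> real" and B \<delta> :: real
  assumes am[measurable]: "a \<in> borel_measurable borel" and aB: "\<And>x. \<bar>a x\<bar> \<le> B"
    and am'[measurable]: "a' \<in> borel_measurable borel" and aB': "\<And>x. \<bar>a' x\<bar> \<le> B"
    and ad: "\<And>x. \<bar>a x - a' x\<bar> \<le> \<delta>"
    and Um[measurable]: "U \<in> borel_measurable borel" and Un: "(\<integral>\<^sup>+ x. ennreal (exp (- U x)) \<partial>lborel) = 1"
  shows "\<bar>exp (a x - U x) / (\<integral> x. exp (a x - U x) \<partial>lborel) - exp (a' x - U x) / (\<integral> x. exp (a' x - U x) \<partial>lborel)\<bar>
     \<le> (exp (2 * B) + exp (4 * B)) * \<delta> * exp (- U x)"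
proof -
  note UI = U_int[OF Um Un]
  note P1 = phi_basic[OF am aB Um Un]
  note P2 = phi_basic[OF am' aB' Um Un]
  have d0: "\<delta> \<ge> 0" using ad[of x] by linarith
  have Ed: "\<bar>exp (a y - U y) - exp (a' y - U y)\<bar> \<le> exp B * \<delta> * exp (- U y)" for y
  proof -
    have "\<bar>exp (a y - U y) - exp (a' y - U y)\<bar> = exp (- U y) * \<bar>exp (a y) - exp (a' y)\<bar>"
      by (simp add: exp_diff abs_mult[symmetric] field_simps exp_minus)
    also have "\<dots> \<le> exp (- U y) * (exp B * \<bar>a y - a' y\<bar>)"
      using aB[of y] aB'[of y] by (intro mult_left_mono exp_diff_le) auto
    also have "\<dots> \<le> exp (- U y) * (exp B * \<delta>)"
      using ad[of y] by (intro mult_left_mono) auto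
    finally show ?thesis by (simp add: mult_ac)
  qed
  have Zd: "\<bar>(\<integral> x. exp (a x - U x) \<partial>lborel) - (\<integral> x. exp (a' x - U x) \<partial>lborel)\<bar> \<le> exp B * \<delta>"
  proof -
    have "(\<integral> x. exp (a x - U x) \<partial>lborel) - (\<integral> x. exp (a' x - U x) \<partial>lborel) = (\<integral> x. exp (a x - U x) - exp (a' x - U x) \<partial>lborel)"
      using P1(1) P2(1) by simp
    moreover have "\<bar>\<integral> x. exp (a x - U x) - exp (a' x - U x) \<partial>lborel\<bar> \<le> (\<integral> x. exp B * \<delta> * exp (- U x) \<partial>lborel)"
      by (rule integral_abs_bound_integral) (use P1(1) P2(1) UI(1) Ed in auto)
    moreover have "(\<integral> x. exp B * \<delta> * exp (- U x) \<partial>lborel) = exp B * \<delta>" using UI(2) by simp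
    ultimately show ?thesis by metis
  qed
  have "\<bar>exp (a x - U x) / (\<integral> x. exp (a x - U x) \<partial>lborel) - exp (a' x - U x) / (\<integral> x. exp (a' x - U x) \<partial>lborel)\<bar>
     \<le> (exp B * \<delta> * exp (- U x)) / exp (- B) + (exp B * exp (- U x)) * (exp B * \<delta>) / (exp (- B))^2"
  proof (rule frac_diff_le[OF _ P1(2) P2(2) Ed _ _ Zd])
    show "exp (a' x - U x) \<le> exp B * exp (- U x)" using aB'[of x] by (simp add: exp_add[symmetric])
  qed auto
  also have "\<dots> = (exp (2 * B) + exp (4 * B)) * \<delta> * exp (- U x)"
  proof -
    have e2: "exp (2 * B) = exp B * exp B" by (subst exp_add[symmetric]) simp
    have "exp (4 * B) = exp (2 * B) * exp (2 * B)" by (subst exp_add[symmetric]) simp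
    then have e4: "exp (4 * B) = exp B * exp B * (exp B * exp B)" using e2 by simp
    have ei: "exp (- B) = inverse (exp B)" by (rule exp_minus)
    have X: "exp B > 0" by simp
    show ?thesis unfolding e2 e4 ei using alg_aux[OF X, of \<delta> "exp (- U x)"] by simp
  qed
  finally show ?thesis .
qed

theorem corollary15:
  fixes F :: "'a::euclidean_space measure \<Rightarrow> real"
    and dF :: "'a measure \<Rightarrow> 'a \<Rightarrow> real"
    and U :: "'a \<Rightarrow> real"
    and p \<sigma> L_F M_F :: real
  assumes p: "p \<ge> 1" and sigma: "\<sigma> > 0"
    and F_nonneg: "\<And>m. prob_borel m \<Longrightarrow> F m \<ge> 0"
    and dF_cont: "\<And>ms m xs x. (\<forall>n. prob_borel (ms n)) \<Longrightarrow> prob_borel m \<Longrightarrow>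
         weak_conv ms m \<Longrightarrow> xs \<longlonglongrightarrow> x \<Longrightarrow> (\<lambda>n. dF (ms n) (xs n)) \<longlonglongrightarrow> dF m x"
    and dF_deriv: "\<And>m0 m1. prob_borel m0 \<Longrightarrow> prob_borel m1 \<Longrightarrow>
         F m1 - F m0 = (LINT l:{0..1}|lborel.
            (\<integral> x. dF (mix l m0 m1) x \<partial>m1) - (\<integral> x. dF (mix l m0 m1) x \<partial>m0))"
    and LF: "L_F > 0" and MF: "M_F > 0"
    and dF_lip: "\<And>m m' x x'. prob_borel m \<Longrightarrow> prob_borel m' \<Longrightarrow>
         ennreal \<bar>dF m x - dF m' x'\<bar> \<le> ennreal L_F * (wass p m m' + ennreal (dist x x'))"
    and dF_bound: "\<And>m x. prob_borel m \<Longrightarrow> \<bar>dF m x\<bar> \<le> M_F"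
    and U_meas: "U \<in> borel_measurable borel"
    and U_norm: "(\<integral>\<^sup>+ x. ennreal (exp (- U x)) \<partial>lborel) = 1"
    and U_essinf: "\<exists>c. AE x in lborel. U x \<ge> c"
    and U_growth: "Liminf at_infinity (\<lambda>x. ereal (U x / norm x powr p)) > 0"
  shows "(\<forall>m. prob_p p m \<longrightarrow> prob_p p (Phi \<sigma> dF U m)) \<and>
         (\<exists>K>0. \<forall>m m'. prob_p p m \<longrightarrow> prob_p p m' \<longrightarrow>
            enn2real (wass p (Phi \<sigma> dF U m) (Phi \<sigma> dF U m'))
              \<le> K * enn2real (wass p m m') powr (1 / p))"
proof -
  note Um[measurable] = U_meas
  define c where "c = 2 / \<sigma>\<^sup>2"
  have c: "c > 0" using sigma by (simp add: c_def)
  define B where "B = c * M_F"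
  define a where "a m x = - (2 / \<sigma>\<^sup>2) * dF m x" for m x
  define \<rho> where "\<rho> m x = exp (a m x - U x) / (\<integral> x. exp (a m x - U x) \<partial>lborel)" for m x
  have Phi_eq: "Phi \<sigma> dF U m = density lborel (\<lambda>x. ennreal (\<rho> m x))" for m
    by (simp add: Phi_def a_def \<rho>_def Let_def)
  have cont: "continuous_on UNIV (dF m)" if "prob_borel m" for m
  proof -
    have "isCont (dF m) x" for x
    proof (rule continuous_at_sequentiallyI)
      fix u assume "u \<longlonglongrightarrow> x"
      moreover have "weak_conv (\<lambda>_. m) m" unfolding weak_conv_def by simp
      ultimately show "(\<lambda>n. dF m (u n)) \<longlonglongrightarrow> dF m x"
        using dF_cont[of "\<lambda>_. m" m u x] that by simp
    qed
    then show ?thesis by (simp add: continuous_on_eq_continuous_at)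
  qed
  have am[measurable]: "a m \<in> borel_measurable borel" if "prob_borel m" for m
  proof -
    have "dF m \<in> borel_measurable borel" by (rule borel_measurable_continuous_onI[OF cont[OF that]])
    then show ?thesis unfolding a_def[abs_def] by measurable
  qed
  have aB: "\<bar>a m x\<bar> \<le> B" if "prob_borel m" for m x
  proof -
    have "\<bar>a m x\<bar> = c * \<bar>dF m x\<bar>" using c by (simp add: a_def c_def abs_mult)
    also have "\<dots> \<le> c * M_F" using dF_bound[OF that] c by (intro mult_left_mono) auto
    finally show ?thesis by (simp add: B_def)
  qed
  have \<rho>m[measurable]: "\<rho> m \<in> borel_measurable borel" if "prob_borel m" for m
    unfolding \<rho>_def[abs_def] using am[OF that] by measurable
  have \<rho>0: "\<rho> m x \<ge> 0" if "prob_borel m" for m x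
    using phi_basic(2)[OF am[OF that] aB[OF that] Um U_norm] unfolding \<rho>_def by (simp add: less_le_trans[OF exp_gt_zero])
  have \<rho>1: "(\<integral>\<^sup>+ x. ennreal (\<rho> m x) \<partial>lborel) = 1" if "prob_borel m" for m
    using phi_basic(3)[OF am[OF that] aB[OF that] Um U_norm] unfolding \<rho>_def by simp
  have \<rho>le: "\<rho> m x \<le> exp (2 * B) * exp (- U x)" if "prob_borel m" for m x
    using phi_basic(4)[OF am[OF that] aB[OF that] Um U_norm] unfolding \<rho>_def by simp
  have MU: "(\<integral>\<^sup>+ x. ennreal (norm x powr p * exp (- U x)) \<partial>lborel) < \<infinity>"
    by (rule moment_U[OF p Um U_norm U_growth])
  then obtain mu where mu: "(\<integral>\<^sup>+ x. ennreal (norm x powr p * exp (- U x)) \<partial>lborel) = ennreal mu" "mu \<ge> 0"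
    by (cases "(\<integral>\<^sup>+ x. ennreal (norm x powr p * exp (- U x)) \<partial>lborel)") auto
  have part1: "prob_p p (Phi \<sigma> dF U m)" if "prob_p p m" for m
  proof -
    have pb: "prob_borel m" using that by (simp add: prob_p_def)
    have ps: "prob_space (density lborel (\<lambda>x. ennreal (\<rho> m x)))"
    proof (rule prob_spaceI)
      have "emeasure (density lborel (\<lambda>x. ennreal (\<rho> m x))) UNIV = (\<integral>\<^sup>+ x. ennreal (\<rho> m x) * indicator UNIV x \<partial>lborel)"
        by (rule emeasure_density) (use \<rho>m[OF pb] in auto)
      then show "emeasure (density lborel (\<lambda>x. ennreal (\<rho> m x))) (space (density lborel (\<lambda>x. ennreal (\<rho> m x)))) = 1"
        using \<rho>1[OF pb] by simp
    qed
    have "(\<integral>\<^sup>+ x. ennreal (norm x powr p) \<partial>density lborel (\<lambda>x. ennreal (\<rho> m x)))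
        = (\<integral>\<^sup>+ x. ennreal (\<rho> m x) * ennreal (norm x powr p) \<partial>lborel)"
      by (rule nn_integral_density) (use \<rho>m[OF pb] in auto)
    also have "\<dots> \<le> (\<integral>\<^sup>+ x. ennreal (exp (2 * B)) * ennreal (norm x powr p * exp (- U x)) \<partial>lborel)"
    proof (intro nn_integral_mono)
      fix x :: 'a
      have "\<rho> m x * norm x powr p \<le> exp (2 * B) * exp (- U x) * norm x powr p"
        using \<rho>le[OF pb, of x] by (intro mult_right_mono) auto
      then have "ennreal (\<rho> m x * norm x powr p) \<le> ennreal (exp (2 * B) * (norm x powr p * exp (- U x)))"
        by (intro ennreal_leI) (simp add: mult_ac)
      then show "ennreal (\<rho> m x) * ennreal (norm x powr p) \<le> ennreal (exp (2 * B)) * ennreal (norm x powr p * exp (- U x))"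
        using \<rho>0[OF pb, of x] by (simp add: ennreal_mult[symmetric])
    qed
    also have "\<dots> = ennreal (exp (2 * B)) * (\<integral>\<^sup>+ x. ennreal (norm x powr p * exp (- U x)) \<partial>lborel)"
      by (rule nn_integral_cmult) simp
    also have "\<dots> < \<infinity>" using MU by (simp add: ennreal_mult_less_top)
    finally have mom: "(\<integral>\<^sup>+ x. ennreal (norm x powr p) \<partial>density lborel (\<lambda>x. ennreal (\<rho> m x))) < \<infinity>" .
    show ?thesis unfolding Phi_eq prob_p_def prob_borel_def using ps mom by simp
  qed
  define C where "C = exp (2 * B) + exp (4 * B)"
  have C0: "C > 0" by (simp add: C_def add_pos_pos)
  define K0 where "K0 = (2 powr p * C * c * L_F * mu) powr (1 / p)"
  define K where "K = K0 + 1"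
  have K0: "K0 \<ge> 0" by (simp add: K0_def)
  have part2: "enn2real (wass p (Phi \<sigma> dF U m) (Phi \<sigma> dF U m')) \<le> K * enn2real (wass p m m') powr (1 / p)"
    if pm: "prob_p p m" and pm': "prob_p p m'" for m m'
  proof -
    have pb: "prob_borel m" and pb': "prob_borel m'" using pm pm' by (auto simp: prob_p_def)
    define w where "w = enn2real (wass p m m')"
    have w0: "w \<ge> 0" by (simp add: w_def)
    have ww: "wass p m m' = ennreal w"
      unfolding w_def using wass_finite[OF pm pm'] p by (simp add: ennreal_enn2real_if)
    have dd: "\<bar>dF m x - dF m' x\<bar> \<le> L_F * w" for x
    proof -
      have "ennreal \<bar>dF m x - dF m' x\<bar> \<le> ennreal L_F * (ennreal w + ennreal (dist x x))"
        using dF_lip[OF pb pb'] ww by metis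
      also have "\<dots> = ennreal (L_F * w)" using LF w0 by (simp add: ennreal_mult)
      finally show ?thesis using LF w0 by (simp add: ennreal_le_iff)
    qed
    define \<delta> where "\<delta> = c * L_F * w"
    have ad: "\<bar>a m x - a m' x\<bar> \<le> \<delta>" for x
    proof -
      have e: "a m x - a m' x = c * (dF m' x - dF m x)" by (simp add: a_def c_def diff_divide_distrib right_diff_distrib)
      have "\<bar>a m x - a m' x\<bar> = c * \<bar>dF m x - dF m' x\<bar>"
        unfolding e using c by (simp add: abs_mult abs_minus_commute)
      also have "\<dots> \<le> c * (L_F * w)" using dd[of x] c by (intro mult_left_mono) auto
      finally show ?thesis by (simp add: \<delta>_def mult_ac)
    qed
    have rd: "\<bar>\<rho> m x - \<rho> m' x\<bar> \<le> C * \<delta> * exp (- U x)" for x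
      unfolding \<rho>_def C_def
      by (rule phi_diff[OF am[OF pb] aB[OF pb] am[OF pb'] aB[OF pb'] ad Um U_norm])
    obtain \<pi> where pi: "\<pi> \<in> couplings (density lborel (\<lambda>x. ennreal (\<rho> m x))) (density lborel (\<lambda>x. ennreal (\<rho> m' x)))"
      and cost: "(\<integral>\<^sup>+ z. ennreal (dist (fst z) (snd z) powr p) \<partial>\<pi>) \<le>
         ennreal (2 powr p) * (\<integral>\<^sup>+ x. ennreal (norm x powr p * \<bar>\<rho> m x - \<rho> m' x\<bar>) \<partial>lborel)"
      using density_coupling[OF \<rho>m[OF pb] \<rho>m[OF pb'] \<rho>0[OF pb] \<rho>0[OF pb'] \<rho>1[OF pb] \<rho>1[OF pb'], of p] p by auto
    have "(\<integral>\<^sup>+ x. ennreal (norm x powr p * \<bar>\<rho> m x - \<rho> m' x\<bar>) \<partial>lborel)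
        \<le> (\<integral>\<^sup>+ x. ennreal (C * \<delta>) * ennreal (norm x powr p * exp (- U x)) \<partial>lborel)"
    proof (intro nn_integral_mono)
      fix x :: 'a
      have "norm x powr p * \<bar>\<rho> m x - \<rho> m' x\<bar> \<le> norm x powr p * (C * \<delta> * exp (- U x))"
        using rd[of x] by (intro mult_left_mono) auto
      then have "ennreal (norm x powr p * \<bar>\<rho> m x - \<rho> m' x\<bar>) \<le> ennreal ((C * \<delta>) * (norm x powr p * exp (- U x)))"
        by (intro ennreal_leI) (simp add: mult_ac)
      also have "\<dots> = ennreal (C * \<delta>) * ennreal (norm x powr p * exp (- U x))"
        using C0 c LF w0 by (intro ennreal_mult) (auto simp: \<delta>_def)
      finally show "ennreal (norm x powr p * \<bar>\<rho> m x - \<rho> m' x\<bar>) \<le> ennreal (C * \<delta>) * ennreal (norm x powr p * exp (- U x))" .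
    qed
    also have "\<dots> = ennreal (C * \<delta>) * ennreal mu"
      by (subst nn_integral_cmult) (auto simp: mu(1))
    finally have "ennreal (2 powr p) * (\<integral>\<^sup>+ x. ennreal (norm x powr p * \<bar>\<rho> m x - \<rho> m' x\<bar>) \<partial>lborel)
        \<le> ennreal (2 powr p) * (ennreal (C * \<delta>) * ennreal mu)"
      by (rule mult_left_mono) simp
    also have "\<dots> = ennreal (2 powr p * C * \<delta> * mu)"
      using C0 c LF w0 mu(2) by (simp add: \<delta>_def ennreal_mult[symmetric] mult_ac)
    finally have cost2: "(\<integral>\<^sup>+ z. ennreal (dist (fst z) (snd z) powr p) \<partial>\<pi>) \<le> ennreal (2 powr p * C * \<delta> * mu)"
      using cost by (rule order_trans[rotated])
    have nn: "2 powr p * C * \<delta> * mu \<ge> 0" using C0 c LF w0 mu(2) by (simp add: \<delta>_def)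
    have "enn2real (wass p (Phi \<sigma> dF U m) (Phi \<sigma> dF U m')) \<le> (2 powr p * C * \<delta> * mu) powr (1 / p)"
      unfolding Phi_eq using wass_le_coupling(2)[OF pi _ nn cost2] p by simp
    also have "(2 powr p * C * \<delta> * mu) = (2 powr p * C * c * L_F * mu) * w"
      by (simp add: \<delta>_def mult_ac)
    also have "((2 powr p * C * c * L_F * mu) * w) powr (1 / p) = K0 * w powr (1 / p)"
      unfolding K0_def using C0 c LF w0 mu(2) by (simp add: powr_mult)
    also have "\<dots> \<le> K * w powr (1 / p)" unfolding K_def by (intro mult_right_mono) auto
    finally show ?thesis by (simp add: w_def)
  qed
  have "K > 0" using K0 by (simp add: K_def)
  then show ?thesis using part1 part2 by blast
qed

end
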